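(* There exist infinitely many terms of the Smarandache square-digital subsequence which are not of the form $N \times 10^{2k}$ with $k \in \mathbb{N}$ and $N$ a perfect square.
   Context: The Smarandache square-digital subsequence consists of those perfect squares $n^2$, $n \in \mathbb{N}_0 = \{0,1,2,\dots\}$, all of whose decimal digits belong to the set $\{0,1,4,9\}$ (i.e., every decimal digit is itself a perfect square). *)

theory Defs
  imports Main
begin

(* every decimal digit of m lies in {0,1,4,9}; digit i is (m div 10^i) mod 10,
   positions beyond the length give digit 0, which is in the set anyway *)
definition square_digital :: "nat \<Rightarrow> bool" where
  "square_digital m \<longleftrightarrow> (\<forall>i::nat. (m div 10 ^ i) mod 10 \<in> {0, 1, 4, 9})"

definition sq_digital_term :: "nat \<Rightarrow> bool" where
  "sq_digital_term m \<longleftrightarrow> (\<exists>n::nat. m = n ^ 2) \<and> square_digital m"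

end

theory Submission
  imports Defs
begin

lemma divpow: "b < (10::nat)^i \<Longrightarrow> (a * 10^i + b) div 10^i = a"
  by simp

lemma m_mod: "k \<ge> 1 \<Longrightarrow> (4*10^(2*k) + 4*10^k + (1::nat)) mod 10 = 1"
proof -
  assume k: "k \<ge> 1"
  have "10 dvd (4*10^(2*k) + 4*10^k::nat)" using k
    by (intro dvd_add; simp add: dvd_power)
  then show ?thesis by (elim dvdE) simp
qed

lemma digits_ok:
  assumes k: "k \<ge> 1"
  shows "square_digital (4*10^(2*k) + 4*10^k + 1)"
  unfolding square_digital_def
proof
  fix i :: nat
  let ?m = "4*10^(2*k) + 4*10^k + (1::nat)"
  consider "i = 0" | "0 < i \<and> i < k" | "i = k" | "k < i \<and> i \<le> 2*k" | "2*k < i" by linarith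
  then show "?m div 10^i mod 10 \<in> {0,1,4,9}"
  proof cases
    case 1
    have "?m mod 10 = 1" using m_mod[OF k] .
    then show ?thesis using 1 by simp
  next
    case 2
    have e: "?m = (4*10^(2*k-i) + 4*10^(k-i)) * 10^i + 1"
      using 2 by (simp add: algebra_simps power_add[symmetric])
    have "?m div 10^i = 4*10^(2*k-i) + 4*10^(k-i)"
      unfolding e using 2 one_less_power[of "10::nat" i] by (intro divpow) simp
    moreover have "10 dvd (4*10^(2*k-i) + 4*10^(k-i)::nat)"
      using 2 by (intro dvd_add; simp add: dvd_power)
    ultimately show ?thesis by simp
  next
    case 3
    have e: "?m = (4*10^k + 4) * 10^i + 1"
      using 3 by (simp add: algebra_simps power_add[symmetric] mult_2)
    have "?m div 10^i = 4*10^k + 4"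
      unfolding e using 3 k one_less_power[of "10::nat" k] by (intro divpow) simp
    moreover have "10 dvd (4*10^k::nat)" using k by (simp add: dvd_power)
    then obtain q where q: "(4*10^k::nat) = 10*q" by (elim dvdE)
    have "(4*10^k + 4::nat) mod 10 = 4" by (simp only: q) simp
    ultimately show ?thesis by simp
  next
    case 4
    have e: "?m = (4*10^(2*k-i)) * 10^i + (4*10^k+1)"
      using 4 by (simp add: algebra_simps power_add[symmetric])
    have lt: "4*10^k+1 < (10::nat)^i"
    proof -
      have "0 < (10::nat)^k" by simp
      moreover have "(10::nat)^Suc k = 10*10^k" by simp
      ultimately have "4*10^k+1 < (10::nat)^Suc k" by linarith
      also have "\<dots> \<le> 10^i" using 4 by (intro power_increasing) auto
      finally show ?thesis .
    qed
    have "?m div 10^i = 4*10^(2*k-i)"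
      unfolding e using lt by (intro divpow)
    show ?thesis
    proof (cases "i = 2*k")
      case True
      then have "?m div 10^i = 4" using \<open>?m div 10^i = 4*10^(2*k-i)\<close> by simp
      then show ?thesis by simp
    next
      case False
      then have "10 dvd (4*10^(2*k-i)::nat)" using 4 by (simp add: dvd_power)
      then show ?thesis using \<open>?m div 10^i = 4*10^(2*k-i)\<close> by simp
    qed
  next
    case 5
    have "?m < 10^Suc (2*k)"
    proof -
      have "(10::nat)^k \<le> 10^(2*k)" by (intro power_increasing) auto
      moreover have "0 < (10::nat)^k" by simp
      moreover have "(10::nat)^Suc (2*k) = 10*10^(2*k)" by simp
      ultimately show ?thesis by linarith
    qed
    also have "\<dots> \<le> 10^i" using 5 by (intro power_increasing) auto
    finally show ?thesis by simp
  qed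
qed

theorem theorem1:
  shows "infinite {m::nat. sq_digital_term m \<and>
            \<not> (\<exists>N k j::nat. k \<ge> 1 \<and> N = j ^ 2 \<and> m = N * 10 ^ (2 * k))}"
proof -
  let ?S = "{m::nat. sq_digital_term m \<and>
            \<not> (\<exists>N k j::nat. k \<ge> 1 \<and> N = j ^ 2 \<and> m = N * 10 ^ (2 * k))}"
  have mem: "4*10^(2*k) + 4*10^k + 1 \<in> ?S" if k: "k \<ge> 1" for k :: nat
  proof -
    let ?m = "4*10^(2*k) + 4*10^k + (1::nat)"
    have sq1: "(2*10^k+1::nat)^2 = 4*(10^k*10^k) + 4*10^k + 1" by (simp add: power2_eq_square algebra_simps)
    have sq2: "(10::nat)^(2*k) = 10^k*10^k" by (simp add: mult_2 power_add)
    have sq: "?m = (2*10^k+1)^2" by (simp only: sq1 sq2)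
    have "\<not> 10 dvd ?m" using m_mod[OF k] by (simp add: dvd_eq_mod_eq_0)
    have x:  "\<not> (\<exists>N k' j::nat. k' \<ge> 1 \<and> N = j ^ 2 \<and> ?m = N * 10 ^ (2 * k'))"
    proof
      assume "\<exists>N k' j::nat. k' \<ge> 1 \<and> N = j ^ 2 \<and> ?m = N * 10 ^ (2 * k')"
      then obtain N k' where k': "k' \<ge> 1" and eq: "?m = N * 10^(2*k')" by blast
      have "10 dvd N * 10^(2*k')" using k' by (intro dvd_mult; simp add: dvd_power)
      then have "10 dvd ?m" by (simp only: eq)
      with \<open>\<not> 10 dvd ?m\<close> show False by simp
    qed
    have y: "sq_digital_term ?m"
      unfolding sq_digital_term_def
    proof
      show "\<exists>n. ?m = n^2" using sq by (rule exI)
      show "square_digital ?m" using digits_ok[OF k] .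
    qed
    show ?thesis by (rule CollectI, rule conjI, rule y, rule x)
  qed
  show ?thesis
  proof
    assume "finite ?S"
    then obtain b where b: "\<forall>x\<in>?S. x \<le> b" unfolding finite_nat_set_iff_bounded_le by blast
    have "b < 10^(b+1)" by (induction b) auto
    also have "\<dots> \<le> 4*10^(2*(b+1)) + 4*10^(b+1) + 1" by simp
    finally have lt: "b < 4*10^(2*(b+1)) + 4*10^(b+1) + 1" .
    have "4*10^(2*(b+1)) + 4*10^(b+1) + 1 \<in> ?S" by (rule mem) simp
    with b have "4*10^(2*(b+1)) + 4*10^(b+1) + 1 \<le> b" by (rule bspec)
    with lt show False by simp
  qed
qed

end
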